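(* Let $e$ be an edge of a graph $G$. Then $\operatorname{reg}(G/e)\le\operatorname{reg}(G)\le\operatorname{reg}(G/e)+1$. Consequently $\operatorname{reg}(H)\le\operatorname{reg}(G)$ whenever $H$ is obtained from $G$ by a sequence of edge contractions.
   Context: For an edge $e=xy$, $G/e$ is the simple graph obtained from $G-\{x,y\}$ by adding a new vertex $w$ adjacent to every vertex of $(N_G(x)\cup N_G(y))\setminus\{x,y\}$. $\operatorname{reg}(G)=\max\{j\ge0:\widetilde H_{j-1}(\operatorname{Ind}(G[S]);\Bbbk)\neq0\text{ for some }S\subseteq V(G)\}$ over a field $\Bbbk$, $\operatorname{Ind}$ the independence complex. *)

theory Defs
  imports Main
begin

type_synonym 'a graph = "'a set \<times> 'a set set"

definition simple_graph :: "'a graph \<Rightarrow> bool" where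
  "simple_graph G \<longleftrightarrow> finite (fst G) \<and>
     (\<forall>e\<in>snd G. card e = 2 \<and> e \<subseteq> fst G)"

definition nbhd :: "'a graph \<Rightarrow> 'a \<Rightarrow> 'a set" where
  "nbhd G x = {z \<in> fst G. {x, z} \<in> snd G}"

text \<open>The new vertex w is a
  parameter; it must not clash with the surviving vertices.\<close>

definition contract :: "'a graph \<Rightarrow> 'a \<Rightarrow> 'a \<Rightarrow> 'a \<Rightarrow> 'a graph" where
  "contract G x y w =
     (insert w (fst G - {x, y}),
      {e \<in> snd G. x \<notin> e \<and> y \<notin> e} \<union>
      {{w, z} | z. z \<in> (nbhd G x \<union> nbhd G y) - {x, y}})"

definition valid_contraction :: "'a graph \<Rightarrow> 'a \<Rightarrow> 'a \<Rightarrow> 'a \<Rightarrow> bool" where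
  "valid_contraction G x y w \<longleftrightarrow> {x, y} \<in> snd G \<and> x \<noteq> y \<and> w \<notin> fst G - {x, y}"

inductive contr_seq :: "'a graph \<Rightarrow> 'a graph \<Rightarrow> bool" where
  refl: "contr_seq G G"
| step: "contr_seq G H \<Longrightarrow> valid_contraction H x y w \<Longrightarrow> contr_seq G (contract H x y w)"

definition ind_complex :: "'a graph \<Rightarrow> 'a set \<Rightarrow> 'a set set" where
  "ind_complex G S = {\<sigma>. \<sigma> \<subseteq> S \<and> (\<forall>e\<in>snd G. \<not> e \<subseteq> \<sigma>)}"

text \<open>Augmented simplicial chain complex over a field 'k, oriented by the linear
  order on vertices.  A q-chain is a coefficient function supported on faces with
  q vertices (so the empty face sits in degree q = 0, i.e. dimension -1).\<close>

definition is_chain :: "'a set set \<Rightarrow> nat \<Rightarrow> ('a set \<Rightarrow> 'k::field) \<Rightarrow> bool" where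
  "is_chain \<Delta> q c \<longleftrightarrow> (\<forall>\<sigma>. c \<sigma> \<noteq> 0 \<longrightarrow> \<sigma> \<in> \<Delta> \<and> card \<sigma> = q)"

definition bd :: "'a::linorder set set \<Rightarrow> ('a set \<Rightarrow> 'k::field) \<Rightarrow> 'a set \<Rightarrow> 'k" where
  "bd \<Delta> c \<tau> = (\<Sum>v\<in>\<Union>\<Delta> - \<tau>. (-1) ^ card {u\<in>\<tau>. u < v} * c (insert v \<tau>))"

text \<open>red_hom_nonzero K \<Delta> q : the reduced homology group of \<Delta> in dimension q-1
  with coefficients in the field 'k is nonzero.\<close>

definition red_hom_nonzero :: "'k::field itself \<Rightarrow> 'a::linorder set set \<Rightarrow> nat \<Rightarrow> bool" where
  "red_hom_nonzero K \<Delta> q \<longleftrightarrow>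
     (\<exists>c :: 'a set \<Rightarrow> 'k. is_chain \<Delta> q c \<and> bd \<Delta> c = (\<lambda>_. 0) \<and>
        \<not> (\<exists>b :: 'a set \<Rightarrow> 'k. is_chain \<Delta> (Suc q) b \<and> bd \<Delta> b = c))"

definition reg :: "'k::field itself \<Rightarrow> 'a::linorder graph \<Rightarrow> nat" where
  "reg K G = Max {j. \<exists>S\<subseteq>fst G. red_hom_nonzero K (ind_complex G S) j}"

end

theory Submission
  imports Defs
begin


definition sg :: "'a::linorder set \<Rightarrow> 'a \<Rightarrow> 'k::field" where
  "sg \<tau> v = (-1) ^ card {u\<in>\<tau>. u < v}"

definition bdV :: "'a::linorder set \<Rightarrow> ('a set \<Rightarrow> 'k::field) \<Rightarrow> 'a set \<Rightarrow> 'k" where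
  "bdV V c \<tau> = (\<Sum>v\<in>V - \<tau>. sg \<tau> v * c (insert v \<tau>))"

definition ext :: "'a::linorder \<Rightarrow> ('a set \<Rightarrow> 'k::field) \<Rightarrow> 'a set \<Rightarrow> 'k" where
  "ext v c \<sigma> = (if v \<in> \<sigma> then 0 else sg \<sigma> v * c (insert v \<sigma>))"

definition cone :: "'a::linorder \<Rightarrow> ('a set \<Rightarrow> 'k::field) \<Rightarrow> 'a set \<Rightarrow> 'k" where
  "cone v c \<sigma> = (if v \<in> \<sigma> then sg (\<sigma> - {v}) v * c (\<sigma> - {v}) else 0)"

lemma sg_insert:
  assumes "finite \<tau>" "u \<notin> \<tau>"
  shows "(sg (insert u \<tau>) v :: 'k::field) = (if u < v then - sg \<tau> v else sg \<tau> v)"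
proof (cases "u < v")
  case True
  have "{w\<in>insert u \<tau>. w < v} = insert u {w\<in>\<tau>. w < v}" using True by auto
  moreover have "card (insert u {w\<in>\<tau>. w < v}) = Suc (card {w\<in>\<tau>. w < v})"
    using assms by auto
  ultimately show ?thesis using True by (simp add: sg_def)
next
  case False
  have "{w\<in>insert u \<tau>. w < v} = {w\<in>\<tau>. w < v}" using False by auto
  then show ?thesis using False by (simp add: sg_def)
qed

lemma sg_sq: "(sg \<tau> v :: 'k::field) * sg \<tau> v = 1"
  by (simp add: sg_def power_mult_distrib[symmetric])

lemma sg_nz: "(sg \<tau> v :: 'k::field) \<noteq> 0"
  by (simp add: sg_def)

lemma antisym_double_sum:
  fixes F :: "'a::linorder \<Rightarrow> 'a \<Rightarrow> 'b::ab_group_add"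
  assumes "finite A" "\<And>u u'. u \<in> A \<Longrightarrow> u' \<in> A \<Longrightarrow> u \<noteq> u' \<Longrightarrow> F u' u = - F u u'"
  shows "(\<Sum>u\<in>A. \<Sum>u'\<in>A - {u}. F u u') = 0"
proof -
  have split: "(\<Sum>u'\<in>A - {u}. F u u') = (\<Sum>u'\<in>A. if u' < u then F u u' else 0) + (\<Sum>u'\<in>A. if u < u' then F u u' else 0)" for u
  proof -
    have "(\<Sum>u'\<in>A - {u}. F u u') = (\<Sum>u'\<in>A. if u' = u then 0 else F u u')"
      using assms(1) by (simp add: sum.If_cases Diff_eq Int_def)
    also have "\<dots> = (\<Sum>u'\<in>A. (if u' < u then F u u' else 0) + (if u < u' then F u u' else 0))"
      by (rule sum.cong) auto
    finally show ?thesis by (simp add: sum.distrib)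
  qed
  have sw: "(\<Sum>u\<in>A. \<Sum>u'\<in>A. if u' < u then F u u' else 0) = (\<Sum>u\<in>A. \<Sum>u'\<in>A. if u < u' then F u' u else 0)"
    by (rule sum.swap)
  also have "\<dots> = (\<Sum>u\<in>A. \<Sum>u'\<in>A. - (if u < u' then F u u' else 0))"
  proof -
    have h: "(if u < u' then F u' u else 0) = - (if u < u' then F u u' else 0)"
      if "u \<in> A" "u' \<in> A" for u u'
      using assms(2)[of u u'] that by (cases "u < u'") auto
    show ?thesis by (simp add: h)
  qed
  finally have "(\<Sum>u\<in>A. \<Sum>u'\<in>A. if u' < u then F u u' else 0) = - (\<Sum>u\<in>A. \<Sum>u'\<in>A. if u < u' then F u u' else 0)"
    by (simp add: sum_negf)
  then show ?thesis by (simp add: split sum.distrib)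
qed

lemma bdbd:
  assumes "finite V" "\<tau> \<subseteq> V"
  shows "bdV V (bdV V c) \<tau> = (0::'k::field)"
proof -
  have ft: "finite \<tau>" using assms finite_subset by blast
  define A where "A = V - \<tau>"
  define F where "F u u' = (sg \<tau> u * sg (insert u \<tau>) u' * c (insert u' (insert u \<tau>)) :: 'k)" for u u'
  have "bdV V (bdV V c) \<tau> = (\<Sum>u\<in>A. \<Sum>u'\<in>A - {u}. F u u')"
    unfolding bdV_def A_def F_def
  proof (rule sum.cong[OF HOL.refl])
    fix x assume "x \<in> V - \<tau>"
    have "V - insert x \<tau> = V - \<tau> - {x}" by auto
    then show "sg \<tau> x * (\<Sum>v\<in>V - insert x \<tau>. sg (insert x \<tau>) v * c (insert v (insert x \<tau>))) = (\<Sum>u'\<in>V - \<tau> - {x}. sg \<tau> x * sg (insert x \<tau>) u' * c (insert u' (insert x \<tau>)))"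
      by (simp add: bdV_def sum_distrib_left mult.assoc)
  qed
  also have "\<dots> = 0"
  proof (rule antisym_double_sum)
    show "finite A" using assms by (simp add: A_def)
    fix u u' assume "u \<in> A" "u' \<in> A" "u \<noteq> u'"
    then have "u \<notin> \<tau>" "u' \<notin> \<tau>" by (auto simp: A_def)
    then show "F u' u = - F u u'" using \<open>u \<noteq> u'\<close>
      unfolding F_def
      by (cases "u < u'") (auto simp: sg_insert[OF ft] insert_commute)
  qed
  finally show ?thesis .
qed

lemma bdV_out:
  assumes "\<And>\<sigma>. c \<sigma> \<noteq> 0 \<Longrightarrow> \<sigma> \<subseteq> V" "\<not> \<tau> \<subseteq> V"
  shows "bdV V c \<tau> = 0"
  unfolding bdV_def
proof (intro sum.neutral ballI)
  fix x assume "x \<in> V - \<tau>"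
  have "c (insert x \<tau>) = 0" using assms by blast
  then show "sg \<tau> x * c (insert x \<tau>) = 0" by simp
qed

lemma bdV_add: "bdV V (\<lambda>\<sigma>. a \<sigma> + b \<sigma>) \<tau> = bdV V a \<tau> + bdV V b \<tau>"
  by (simp add: bdV_def sum.distrib algebra_simps)

lemma bdV_diff: "bdV V (\<lambda>\<sigma>. a \<sigma> - b \<sigma>) \<tau> = bdV V a \<tau> - bdV V b \<tau>"
  by (simp add: bdV_def sum_subtractf algebra_simps)

lemma bdV_neg: "bdV V (\<lambda>\<sigma>. - a \<sigma>) \<tau> = - bdV V a \<tau>"
  by (simp add: bdV_def sum_negf)

lemma bdV_zero: "bdV V (\<lambda>\<sigma>. 0) \<tau> = 0"
  by (simp add: bdV_def)

lemma bd_ext: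
  fixes c :: "'a::linorder set \<Rightarrow> 'k::field"
  assumes "finite V" "\<tau> \<subseteq> V" "v \<notin> \<tau>"
  shows "bdV V c (insert v \<tau>) = - sg \<tau> v * bdV V (ext v c) \<tau>"
proof -
  have ft: "finite \<tau>" using assms finite_subset by blast
  have "bdV V (ext v c) \<tau> = (\<Sum>u\<in>V - \<tau> - {v}. sg \<tau> u * ext v c (insert u \<tau>))"
    unfolding bdV_def using assms
    by (intro sum.mono_neutral_right) (auto simp: ext_def)
  also have "\<dots> = (\<Sum>u\<in>V - insert v \<tau>. sg \<tau> u * (sg (insert u \<tau>) v * c (insert u (insert v \<tau>))))"
    using assms(3) by (intro sum.cong) (auto simp: ext_def insert_commute)
  finally have e: "bdV V (ext v c) \<tau> = \<dots>" .
  have "- sg \<tau> v * bdV V (ext v c) \<tau> = (\<Sum>u\<in>V - insert v \<tau>. sg (insert v \<tau>) u * c (insert u (insert v \<tau>)))"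
    unfolding e sum_distrib_left
  proof (rule sum.cong[OF HOL.refl])
    fix u assume u: "u \<in> V - insert v \<tau>"
    then have "u \<notin> \<tau>" "u \<noteq> v" by auto
    have s1: "(sg \<tau> v :: 'k) * sg \<tau> v = 1" by (rule sg_sq)
    show "- sg \<tau> v * (sg \<tau> u * (sg (insert u \<tau>) v * c (insert u (insert v \<tau>)))) =
        sg (insert v \<tau>) u * c (insert u (insert v \<tau>))"
      using \<open>u \<notin> \<tau>\<close> \<open>u \<noteq> v\<close> assms(3) s1
      by (cases "u < v") (auto simp: sg_insert[OF ft] algebra_simps)
  qed
  then show ?thesis by (simp add: bdV_def)
qed

definition Hn :: "'k::field itself \<Rightarrow> 'a::linorder set \<Rightarrow> 'a set set \<Rightarrow> nat \<Rightarrow> bool" where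
  "Hn K V \<Delta> q \<longleftrightarrow>
     (\<exists>c :: 'a set \<Rightarrow> 'k. is_chain \<Delta> q c \<and> bdV V c = (\<lambda>_. 0) \<and>
        \<not> (\<exists>b :: 'a set \<Rightarrow> 'k. is_chain \<Delta> (Suc q) b \<and> bdV V b = c))"

lemma bdbd_all:
  fixes c :: "'a::linorder set \<Rightarrow> 'k::field"
  assumes "finite V" "\<And>\<sigma>. c \<sigma> \<noteq> 0 \<Longrightarrow> \<sigma> \<subseteq> V"
  shows "bdV V (bdV V c) = (\<lambda>_. 0)"
proof
  fix \<tau>
  show "bdV V (bdV V c) \<tau> = 0"
  proof (cases "\<tau> \<subseteq> V")
    case True then show ?thesis using bdbd assms by blast
  next
    case False
    have "\<And>\<sigma>. bdV V c \<sigma> \<noteq> 0 \<Longrightarrow> \<sigma> \<subseteq> V" using bdV_out[OF assms(2)] by blast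
    then show ?thesis using bdV_out False by blast
  qed
qed

lemma ext_cone:
  fixes c :: "'a::linorder set \<Rightarrow> 'k::field"
  assumes "\<And>\<sigma>. c \<sigma> \<noteq> 0 \<Longrightarrow> v \<notin> \<sigma>"
  shows "ext v (cone v c) = c"
proof
  fix \<sigma>
  show "ext v (cone v c) \<sigma> = c \<sigma>"
  proof (cases "v \<in> \<sigma>")
    case True then show ?thesis using assms by (auto simp: ext_def)
  next
    case False
    then have "insert v \<sigma> - {v} = \<sigma>" by auto
    then show ?thesis using False by (simp add: ext_def cone_def mult.assoc[symmetric] sg_sq)
  qed
qed

lemma cone_ext:
  fixes c :: "'a::linorder set \<Rightarrow> 'k::field"
  assumes "v \<in> \<sigma>"
  shows "cone v (ext v c) \<sigma> = c \<sigma>"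
proof -
  have "insert v (\<sigma> - {v}) = \<sigma>" using assms by auto
  then show ?thesis using assms by (simp add: ext_def cone_def mult.assoc[symmetric] sg_sq)
qed

lemma bd_cone:
  fixes c :: "'a::linorder set \<Rightarrow> 'k::field"
  assumes fV: "finite V" and vV: "v \<in> V" and "\<tau> \<subseteq> V" and vf: "\<And>\<sigma>. c \<sigma> \<noteq> 0 \<Longrightarrow> v \<notin> \<sigma>"
  shows "bdV V (cone v c) \<tau> = (if v \<in> \<tau> then - sg (\<tau> - {v}) v * bdV V c (\<tau> - {v}) else c \<tau>)"
proof (cases "v \<in> \<tau>")
  case True
  define \<rho> where "\<rho> = \<tau> - {v}"
  have t: "\<tau> = insert v \<rho>" using True by (auto simp: \<rho>_def)
  have "bdV V (cone v c) (insert v \<rho>) = - sg \<rho> v * bdV V (ext v (cone v c)) \<rho>"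
  proof -
    have r1: "\<rho> \<subseteq> V" using \<open>\<tau> \<subseteq> V\<close> by (auto simp: \<rho>_def)
    have r2: "v \<notin> \<rho>" by (simp add: \<rho>_def)
    show ?thesis by (rule bd_ext[OF fV r1 r2])
  qed
  then have "bdV V (cone v c) \<tau> = - sg \<rho> v * bdV V c \<rho>" using t ext_cone[where c=c and v=v, OF vf] by simp
  then show ?thesis using True by (simp add: \<rho>_def)
next
  case False
  have "bdV V (cone v c) \<tau> = (\<Sum>u\<in>V - \<tau>. if u = v then c \<tau> else 0)"
    unfolding bdV_def
  proof (rule sum.cong[OF HOL.refl])
    fix u assume "u \<in> V - \<tau>"
    show "sg \<tau> u * cone v c (insert u \<tau>) = (if u = v then c \<tau> else 0)"
    proof (cases "u = v")
      case True
      then have "insert v \<tau> - {v} = \<tau>" using False by auto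
      then show ?thesis using True by (simp add: cone_def mult.assoc[symmetric] sg_sq)
    next
      case False2: False
      then show ?thesis using False by (simp add: cone_def)
    qed
  qed
  also have "\<dots> = (if v \<in> V - \<tau> then c \<tau> else 0)"
    by (simp add: sum.delta[OF finite_Diff[OF fV]])
  finally show ?thesis using False vf vV by auto
qed

lemma chain_sub:
  "is_chain \<Delta> q c \<Longrightarrow> \<Delta> \<subseteq> Pow V \<Longrightarrow> c \<sigma> \<noteq> 0 \<Longrightarrow> \<sigma> \<subseteq> V"
  unfolding is_chain_def by blast

lemma OR:
  fixes K :: "'k::field itself" and V :: "'a::linorder set"
  assumes fV: "finite V" and sub: "\<Delta> \<subseteq> Pow V"
    and dc: "\<And>\<sigma> \<rho>. \<sigma> \<in> \<Delta> \<Longrightarrow> \<rho> \<subseteq> \<sigma> \<Longrightarrow> \<rho> \<in> \<Delta>"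
    and vV: "v \<in> V" and H: "Hn K V \<Delta> (Suc p)"
  shows "Hn K V {\<sigma>\<in>\<Delta>. v \<notin> \<sigma>} (Suc p) \<or> Hn K V {\<sigma>. v \<notin> \<sigma> \<and> insert v \<sigma> \<in> \<Delta>} p"
proof (rule ccontr)
  define D where "D = {\<sigma>\<in>\<Delta>. v \<notin> \<sigma>}"
  define L where "L = {\<sigma>. v \<notin> \<sigma> \<and> insert v \<sigma> \<in> \<Delta>}"
  assume "\<not> ?thesis"
  then have nD: "\<And>c::'a set\<Rightarrow>'k. is_chain D (Suc p) c \<Longrightarrow> bdV V c = (\<lambda>_. 0) \<Longrightarrow>
      \<exists>b::'a set\<Rightarrow>'k. is_chain D (Suc (Suc p)) b \<and> bdV V b = c"
    and nL: "\<And>c::'a set\<Rightarrow>'k. is_chain L p c \<Longrightarrow> bdV V c = (\<lambda>_. 0) \<Longrightarrow>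
      \<exists>b::'a set\<Rightarrow>'k. is_chain L (Suc p) b \<and> bdV V b = c"
    unfolding Hn_def D_def L_def by blast+
  from H obtain z :: "'a set \<Rightarrow> 'k" where zc: "is_chain \<Delta> (Suc p) z" and z0: "bdV V z = (\<lambda>_. 0)"
    and nb: "\<not> (\<exists>b::'a set\<Rightarrow>'k. is_chain \<Delta> (Suc (Suc p)) b \<and> bdV V b = z)"
    unfolding Hn_def by blast
  have zsub: "\<And>\<sigma>. z \<sigma> \<noteq> 0 \<Longrightarrow> \<sigma> \<subseteq> V" using chain_sub[OF zc sub] by blast
  define zL where "zL = ext v z"
  have zLc: "is_chain L p zL"
    unfolding is_chain_def
  proof (intro allI impI)
    fix \<sigma> assume "zL \<sigma> \<noteq> 0"
    then have "v \<notin> \<sigma>" "z (insert v \<sigma>) \<noteq> 0" by (auto simp: zL_def ext_def split: if_splits)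
    then have "insert v \<sigma> \<in> \<Delta>" "card (insert v \<sigma>) = Suc p" using zc by (auto simp: is_chain_def)
    moreover have "finite \<sigma>" using \<open>insert v \<sigma> \<in> \<Delta>\<close> sub fV by (meson PowD finite_insert finite_subset subsetD)
    ultimately show "\<sigma> \<in> L \<and> card \<sigma> = p" using \<open>v \<notin> \<sigma>\<close> by (auto simp: L_def)
  qed
  have zLsub: "\<And>\<sigma>. zL \<sigma> \<noteq> 0 \<Longrightarrow> \<sigma> \<subseteq> V"
    using zLc sub unfolding is_chain_def L_def by blast
  have zL0: "bdV V zL = (\<lambda>_. 0)"
  proof
    fix \<tau>
    show "bdV V zL \<tau> = 0"
    proof (cases "\<tau> \<subseteq> V")
      case False then show ?thesis using bdV_out[OF zLsub] by blast
    next
      case True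
      show ?thesis
      proof (cases "v \<in> \<tau>")
        case True
        then show ?thesis unfolding bdV_def zL_def by (intro sum.neutral) (auto simp: ext_def)
      next
        case False
        have "bdV V z (insert v \<tau>) = - sg \<tau> v * bdV V (ext v z) \<tau>"
          by (rule bd_ext[OF fV \<open>\<tau> \<subseteq> V\<close> False])
        then have "- sg \<tau> v * bdV V zL \<tau> = 0" using z0 by (simp add: zL_def fun_eq_iff)
        then show ?thesis using sg_nz[of \<tau> v, where 'k='k] by simp
      qed
    qed
  qed
  obtain bL :: "'a set \<Rightarrow> 'k" where bLc: "is_chain L (Suc p) bL" and bL0: "bdV V bL = zL"
    using nL[OF zLc zL0] by blast
  have bLvf: "\<And>\<sigma>. bL \<sigma> \<noteq> 0 \<Longrightarrow> v \<notin> \<sigma>" using bLc by (auto simp: is_chain_def L_def)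
  have bLsub: "\<And>\<sigma>. bL \<sigma> \<noteq> 0 \<Longrightarrow> insert v \<sigma> \<in> \<Delta>" using bLc by (auto simp: is_chain_def L_def)
  have conesub: "\<And>\<sigma>. cone v bL \<sigma> \<noteq> 0 \<Longrightarrow> \<sigma> \<in> \<Delta> \<and> card \<sigma> = Suc (Suc p)"
  proof -
    fix \<sigma> assume "cone v bL \<sigma> \<noteq> 0"
    then have "v \<in> \<sigma>" "bL (\<sigma> - {v}) \<noteq> 0" by (auto simp: cone_def split: if_splits)
    then have "\<sigma> - {v} \<in> L" "card (\<sigma> - {v}) = Suc p" using bLc by (auto simp: is_chain_def)
    then have "\<sigma> \<in> \<Delta>" using \<open>v \<in> \<sigma>\<close> by (auto simp: L_def insert_absorb)
    then have "finite \<sigma>" using sub fV by (meson PowD finite_subset subsetD)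
    then show "\<sigma> \<in> \<Delta> \<and> card \<sigma> = Suc (Suc p)" using \<open>\<sigma> \<in> \<Delta>\<close> \<open>v \<in> \<sigma>\<close> \<open>card (\<sigma> - {v}) = Suc p\<close>
      by (metis card_Suc_Diff1)
  qed
  have conesubV: "\<And>\<sigma>. cone v bL \<sigma> \<noteq> 0 \<Longrightarrow> \<sigma> \<subseteq> V" using conesub sub by blast
  define y where "y \<sigma> = z \<sigma> + bdV V (cone v bL) \<sigma>" for \<sigma>
  have y0: "bdV V y = (\<lambda>_. 0)"
    unfolding y_def bdV_add[abs_def] using z0 bdbd_all[OF fV conesubV] by (simp add: fun_eq_iff)
  have yc: "is_chain D (Suc p) y"
    unfolding is_chain_def
  proof (intro allI impI)
    fix \<sigma> assume yn: "y \<sigma> \<noteq> 0"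
    show "\<sigma> \<in> D \<and> card \<sigma> = Suc p"
    proof (cases "\<sigma> \<subseteq> V")
      case False
      then have "z \<sigma> = 0" using zsub by blast
      moreover have "bdV V (cone v bL) \<sigma> = 0" using bdV_out[OF conesubV False] .
      ultimately show ?thesis using yn by (simp add: y_def)
    next
      case True
      note bc = bd_cone[where c=bL and v=v and \<tau>=\<sigma> and V=V, OF fV vV True bLvf]
      show ?thesis
      proof (cases "v \<in> \<sigma>")
        case True
        define \<rho> where "\<rho> = \<sigma> - {v}"
        have "insert v \<rho> = \<sigma>" using True by (auto simp: \<rho>_def)
        then have "zL \<rho> = sg \<rho> v * z \<sigma>" by (auto simp: zL_def ext_def \<rho>_def)
        then have "y \<sigma> = z \<sigma> - sg \<rho> v * (sg \<rho> v * z \<sigma>)"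
          using bc True bL0 by (simp add: y_def \<rho>_def)
        then have "y \<sigma> = 0" by (simp add: mult.assoc[symmetric] sg_sq)
        then show ?thesis using yn by simp
      next
        case False
        then have "y \<sigma> = z \<sigma> + bL \<sigma>" using bc by (simp add: y_def)
        then have "z \<sigma> \<noteq> 0 \<or> bL \<sigma> \<noteq> 0" using yn by auto
        then show ?thesis
        proof
          assume "z \<sigma> \<noteq> 0" then show ?thesis using zc False by (auto simp: is_chain_def D_def)
        next
          assume "bL \<sigma> \<noteq> 0"
          then have "\<sigma> \<in> L" "card \<sigma> = Suc p" using bLc by (auto simp: is_chain_def)
          then show ?thesis using dc by (auto simp: L_def D_def)
        qed
      qed
    qed
  qed
  obtain bD :: "'a set \<Rightarrow> 'k" where bDc: "is_chain D (Suc (Suc p)) bD" and bD0: "bdV V bD = y"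
    using nD[OF yc y0] by blast
  define b where "b \<sigma> = bD \<sigma> - cone v bL \<sigma>" for \<sigma>
  have "bdV V b = z"
    unfolding b_def bdV_diff[abs_def] bD0 by (simp add: y_def fun_eq_iff)
  moreover have "is_chain \<Delta> (Suc (Suc p)) b"
    unfolding is_chain_def
  proof (intro allI impI)
    fix \<sigma> assume "b \<sigma> \<noteq> 0"
    then have "bD \<sigma> \<noteq> 0 \<or> cone v bL \<sigma> \<noteq> 0" by (auto simp: b_def)
    then show "\<sigma> \<in> \<Delta> \<and> card \<sigma> = Suc (Suc p)"
      using bDc conesub by (auto simp: is_chain_def D_def)
  qed
  ultimately show False using nb by blast
qed




lemma bd_cone_cycle:
  fixes c :: "'a::linorder set \<Rightarrow> 'k::field"
  assumes fV: "finite V" and vV: "v \<in> V" and vf: "\<And>\<sigma>. c \<sigma> \<noteq> 0 \<Longrightarrow> v \<notin> \<sigma>"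
    and cs: "\<And>\<sigma>. c \<sigma> \<noteq> 0 \<Longrightarrow> \<sigma> \<subseteq> V" and c0: "bdV V c = (\<lambda>_. 0)"
  shows "bdV V (cone v c) = c"
proof
  fix \<tau>
  have css: "\<And>\<sigma>. cone v c \<sigma> \<noteq> 0 \<Longrightarrow> \<sigma> \<subseteq> V"
  proof -
    fix \<sigma> assume "cone v c \<sigma> \<noteq> 0"
    then have "v \<in> \<sigma>" "c (\<sigma> - {v}) \<noteq> 0" by (auto simp: cone_def split: if_splits)
    then have "\<sigma> - {v} \<subseteq> V" using cs by blast
    then show "\<sigma> \<subseteq> V" using vV by blast
  qed
  show "bdV V (cone v c) \<tau> = c \<tau>"
  proof (cases "\<tau> \<subseteq> V")
    case False
    have "c \<tau> = 0" using cs False by blast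
    then show ?thesis using bdV_out[OF css False] by simp
  next
    case True
    note bc = bd_cone[where c=c and v=v and \<tau>=\<tau> and V=V, OF fV vV True vf]
    show ?thesis
    proof (cases "v \<in> \<tau>")
      case True
      then have "c \<tau> = 0" using vf by blast
      moreover have "bdV V c (\<tau> - {v}) = 0" using c0 by simp
      ultimately show ?thesis using bc True by simp
    next
      case False
      then show ?thesis using bc by simp
    qed
  qed
qed

lemma SUSP:
  fixes K :: "'k::field itself" and V :: "'a::linorder set"
  assumes fV: "finite V" and sub: "\<Delta> \<subseteq> Pow V" and xV: "x \<in> V" and yV: "y \<in> V" and xy: "x \<noteq> y"
    and yK: "\<And>\<rho>. x \<notin> \<rho> \<Longrightarrow> insert x \<rho> \<in> \<Delta> \<Longrightarrow> y \<notin> \<rho> \<and> insert y \<rho> \<in> \<Delta>"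
    and H: "Hn K V {\<sigma>. x \<notin> \<sigma> \<and> insert x \<sigma> \<in> \<Delta>} q"
  shows "Hn K V \<Delta> (Suc q)"
proof -
  define K0 where "K0 = {\<sigma>. x \<notin> \<sigma> \<and> insert x \<sigma> \<in> \<Delta>}"
  from H obtain z :: "'a set \<Rightarrow> 'k" where zc: "is_chain K0 q z" and z0: "bdV V z = (\<lambda>_. 0)"
    and nb: "\<not> (\<exists>b::'a set\<Rightarrow>'k. is_chain K0 (Suc q) b \<and> bdV V b = z)"
    unfolding Hn_def K0_def by blast
  have zK: "\<And>\<sigma>. z \<sigma> \<noteq> 0 \<Longrightarrow> \<sigma> \<in> K0 \<and> card \<sigma> = q" using zc by (auto simp: is_chain_def)
  have zx: "\<And>\<sigma>. z \<sigma> \<noteq> 0 \<Longrightarrow> x \<notin> \<sigma>" using zK by (auto simp: K0_def)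
  have zy: "y \<notin> \<sigma>" if "z \<sigma> \<noteq> 0" for \<sigma>
  proof -
    have "x \<notin> \<sigma>" "insert x \<sigma> \<in> \<Delta>" using zK[OF that] by (auto simp: K0_def)
    then show ?thesis using yK by blast
  qed
  have zs: "\<sigma> \<subseteq> V" if "z \<sigma> \<noteq> 0" for \<sigma>
  proof -
    have "insert x \<sigma> \<in> \<Delta>" using zK[OF that] by (auto simp: K0_def)
    then show ?thesis using sub by blast
  qed
  have cx: "bdV V (cone x z) = z" by (rule bd_cone_cycle[OF fV xV zx zs z0])
  have cy: "bdV V (cone y z) = z" by (rule bd_cone_cycle[OF fV yV zy zs z0])
  define Z where "Z \<sigma> = cone x z \<sigma> - cone y z \<sigma>" for \<sigma>
  have Z0: "bdV V Z = (\<lambda>_. 0)" unfolding Z_def bdV_diff[abs_def] cx cy by simp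
  have conech: "\<sigma> \<in> \<Delta> \<and> card \<sigma> = Suc q" if "cone v z \<sigma> \<noteq> 0" "v = x \<or> v = y" for v \<sigma>
  proof -
    from that have "v \<in> \<sigma>" "z (\<sigma> - {v}) \<noteq> 0" by (auto simp: cone_def split: if_splits)
    then have k: "\<sigma> - {v} \<in> K0" "card (\<sigma> - {v}) = q" using zK by auto
    from k(1) have kx: "x \<notin> \<sigma> - {v}" "insert x (\<sigma> - {v}) \<in> \<Delta>" by (auto simp: K0_def)
    have "insert v (\<sigma> - {v}) \<in> \<Delta>"
      using that(2)
    proof
      assume "v = x" then show ?thesis using kx by simp
    next
      assume "v = y" then show ?thesis using yK[OF kx] by simp
    qed
    then have "\<sigma> \<in> \<Delta>" using \<open>v \<in> \<sigma>\<close> by (simp add: insert_absorb)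
    then have "finite \<sigma>" using sub fV by (meson PowD finite_subset subsetD)
    then show ?thesis using \<open>\<sigma> \<in> \<Delta>\<close> \<open>v \<in> \<sigma>\<close> k(2) by (metis card_Suc_Diff1)
  qed
  have Zc: "is_chain \<Delta> (Suc q) Z"
    unfolding is_chain_def
  proof (intro allI impI)
    fix \<sigma> assume "Z \<sigma> \<noteq> 0"
    then have "cone x z \<sigma> \<noteq> 0 \<or> cone y z \<sigma> \<noteq> 0" by (auto simp: Z_def)
    then show "\<sigma> \<in> \<Delta> \<and> card \<sigma> = Suc q" using conech by blast
  qed
  have "\<not> (\<exists>B::'a set\<Rightarrow>'k. is_chain \<Delta> (Suc (Suc q)) B \<and> bdV V B = Z)"
  proof
    assume "\<exists>B::'a set\<Rightarrow>'k. is_chain \<Delta> (Suc (Suc q)) B \<and> bdV V B = Z"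
    then obtain B :: "'a set\<Rightarrow>'k" where Bc: "is_chain \<Delta> (Suc (Suc q)) B" and B0: "bdV V B = Z" by blast
    define e where "e \<sigma> = - ext x B \<sigma>" for \<sigma>
    have en: "x \<notin> \<sigma> \<and> insert x \<sigma> \<in> \<Delta> \<and> card (insert x \<sigma>) = Suc (Suc q)" if "e \<sigma> \<noteq> 0" for \<sigma>
    proof -
      from that have "x \<notin> \<sigma>" "B (insert x \<sigma>) \<noteq> 0" by (auto simp: e_def ext_def split: if_splits)
      then show ?thesis using Bc by (auto simp: is_chain_def)
    qed
    have es: "\<sigma> \<subseteq> V" if "e \<sigma> \<noteq> 0" for \<sigma>
    proof -
      have "insert x \<sigma> \<in> \<Delta>" using en[OF that] by blast
      then show ?thesis using sub by blast
    qed
    have ec: "is_chain K0 (Suc q) e"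
      unfolding is_chain_def
    proof (intro allI impI)
      fix \<sigma> assume "e \<sigma> \<noteq> 0"
      note h = en[OF this]
      have "finite \<sigma>" using es[OF \<open>e \<sigma> \<noteq> 0\<close>] fV finite_subset by blast
      then show "\<sigma> \<in> K0 \<and> card \<sigma> = Suc q" using h by (auto simp: K0_def)
    qed
    have "bdV V e = z"
    proof
      fix \<tau>
      show "bdV V e \<tau> = z \<tau>"
      proof (cases "\<tau> \<subseteq> V")
        case False
        have "z \<tau> = 0" using zs False by blast
        then show ?thesis using bdV_out[OF es False] by simp
      next
        case True
        show ?thesis
        proof (cases "x \<in> \<tau>")
          case True
          then have "bdV V e \<tau> = 0" unfolding bdV_def e_def by (intro sum.neutral) (auto simp: ext_def)
          moreover have "z \<tau> = 0" using zx True by blast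
          ultimately show ?thesis by simp
        next
          case False
          have "bdV V B (insert x \<tau>) = - sg \<tau> x * bdV V (ext x B) \<tau>"
            by (rule bd_ext[OF fV \<open>\<tau> \<subseteq> V\<close> False])
          moreover have "bdV V B (insert x \<tau>) = sg \<tau> x * z \<tau>"
          proof -
            have a: "cone x z (insert x \<tau>) = sg \<tau> x * z \<tau>"
              using False by (simp add: cone_def)
            have b: "cone y z (insert x \<tau>) = 0"
              using zx xy by (auto simp: cone_def)
            show ?thesis using B0 a b by (simp add: Z_def)
          qed
          moreover have "bdV V e \<tau> = - bdV V (ext x B) \<tau>"
            unfolding e_def[abs_def] by (rule bdV_neg)
          ultimately have "sg \<tau> x * z \<tau> = sg \<tau> x * bdV V e \<tau>"
            by simp
          then show ?thesis using sg_nz[of \<tau> x, where 'k='k] by simp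
        qed
      qed
    qed
    then show False using nb ec by blast
  qed
  then show ?thesis unfolding Hn_def using Zc Z0 by blast
qed




lemma bd_eq:
  fixes c :: "'a::linorder set \<Rightarrow> 'k::field"
  assumes ch: "is_chain \<Delta> q c" and fV: "finite V" and U: "\<Union>\<Delta> \<subseteq> V"
  shows "bd \<Delta> c = bdV V c"
proof
  fix \<tau>
  have "bd \<Delta> c \<tau> = (\<Sum>v\<in>\<Union>\<Delta> - \<tau>. sg \<tau> v * c (insert v \<tau>))"
    by (simp add: bd_def sg_def)
  also have "\<dots> = (\<Sum>v\<in>V - \<tau>. sg \<tau> v * c (insert v \<tau>))"
  proof (rule sum.mono_neutral_left)
    show "finite (V - \<tau>)" using fV by simp
    show "\<Union>\<Delta> - \<tau> \<subseteq> V - \<tau>" using U by blast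
    show "\<forall>i\<in>V - \<tau> - (\<Union>\<Delta> - \<tau>). sg \<tau> i * c (insert i \<tau>) = 0"
    proof
      fix i assume i: "i \<in> V - \<tau> - (\<Union>\<Delta> - \<tau>)"
      have "c (insert i \<tau>) = 0"
      proof (rule ccontr)
        assume "c (insert i \<tau>) \<noteq> 0"
        then have "insert i \<tau> \<in> \<Delta>" using ch by (auto simp: is_chain_def)
        then show False using i by blast
      qed
      then show "sg \<tau> i * c (insert i \<tau>) = 0" by simp
    qed
  qed
  finally show "bd \<Delta> c \<tau> = bdV V c \<tau>" by (simp add: bdV_def)
qed

lemma red_Hn:
  fixes K :: "'k::field itself"
  assumes fV: "finite V" and U: "\<Union>\<Delta> \<subseteq> V"
  shows "red_hom_nonzero K \<Delta> q = Hn K V \<Delta> q"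
proof -
  have e: "\<And>q (c::'a set \<Rightarrow> 'k). is_chain \<Delta> q c \<Longrightarrow> bd \<Delta> c = bdV V c"
    using bd_eq[OF _ fV U] by blast
  show ?thesis
  proof
    assume "red_hom_nonzero K \<Delta> q"
    then obtain c :: "'a set \<Rightarrow> 'k" where c: "is_chain \<Delta> q c" "bd \<Delta> c = (\<lambda>_. 0)"
      and nb: "\<not> (\<exists>b :: 'a set \<Rightarrow> 'k. is_chain \<Delta> (Suc q) b \<and> bd \<Delta> b = c)"
      unfolding red_hom_nonzero_def by blast
    have "\<not> (\<exists>b :: 'a set \<Rightarrow> 'k. is_chain \<Delta> (Suc q) b \<and> bdV V b = c)"
      using nb e by metis
    then show "Hn K V \<Delta> q" unfolding Hn_def using c e by metis
  next
    assume "Hn K V \<Delta> q"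
    then obtain c :: "'a set \<Rightarrow> 'k" where c: "is_chain \<Delta> q c" "bdV V c = (\<lambda>_. 0)"
      and nb: "\<not> (\<exists>b :: 'a set \<Rightarrow> 'k. is_chain \<Delta> (Suc q) b \<and> bdV V b = c)"
      unfolding Hn_def by blast
    have "\<not> (\<exists>b :: 'a set \<Rightarrow> 'k. is_chain \<Delta> (Suc q) b \<and> bd \<Delta> b = c)"
      using nb e by metis
    then show "red_hom_nonzero K \<Delta> q" unfolding red_hom_nonzero_def using c e by metis
  qed
qed

lemma ind_sub: "ind_complex G S \<subseteq> Pow S"
  by (auto simp: ind_complex_def)

lemma ind_Union: "\<Union>(ind_complex G S) \<subseteq> S"
  by (auto simp: ind_complex_def)

lemma ind_dc: "\<sigma> \<in> ind_complex G S \<Longrightarrow> \<rho> \<subseteq> \<sigma> \<Longrightarrow> \<rho> \<in> ind_complex G S"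
  unfolding ind_complex_def by blast

lemma ind_del: "{\<sigma> \<in> ind_complex G S. v \<notin> \<sigma>} = ind_complex G (S - {v})"
  by (auto simp: ind_complex_def)

lemma red_bound:
  fixes K :: "'k::field itself"
  assumes fS: "finite S" and sub: "\<Delta> \<subseteq> Pow S" and r: "red_hom_nonzero K \<Delta> j"
  shows "j \<le> card S"
proof (rule ccontr)
  assume "\<not> j \<le> card S"
  from r obtain c :: "'a set \<Rightarrow> 'k" where c: "is_chain \<Delta> j c"
    and nb: "\<not> (\<exists>b :: 'a set \<Rightarrow> 'k. is_chain \<Delta> (Suc j) b \<and> bd \<Delta> b = c)"
    unfolding red_hom_nonzero_def by blast
  have c0: "c = (\<lambda>_. 0)"
  proof
    fix \<sigma> show "c \<sigma> = 0"
    proof (rule ccontr)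
      assume "c \<sigma> \<noteq> 0"
      then have "\<sigma> \<subseteq> S" "card \<sigma> = j" using c sub by (auto simp: is_chain_def)
      then have "j \<le> card S" using fS card_mono by blast
      then show False using \<open>\<not> j \<le> card S\<close> by simp
    qed
  qed
  have "is_chain \<Delta> (Suc j) (\<lambda>_. 0 :: 'k)" by (simp add: is_chain_def)
  moreover have "bd \<Delta> (\<lambda>_. 0 :: 'k) = c" by (simp add: c0 bd_def fun_eq_iff)
  ultimately show False using nb by blast
qed

lemma reg_ge:
  fixes K :: "'k::field itself" and G :: "'a::linorder graph"
  assumes f: "finite (fst G)" and S: "S \<subseteq> fst G" and r: "red_hom_nonzero K (ind_complex G S) j"
  shows "j \<le> reg K G"
proof -
  let ?A = "{j. \<exists>S\<subseteq>fst G. red_hom_nonzero K (ind_complex G S) j}"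
  have "?A \<subseteq> {..card (fst G)}"
  proof
    fix j assume "j \<in> ?A"
    then obtain S where "S \<subseteq> fst G" "red_hom_nonzero K (ind_complex G S) j" by blast
    then have "j \<le> card S" using red_bound[OF _ ind_sub] f finite_subset by blast
    also have "card S \<le> card (fst G)" using \<open>S \<subseteq> fst G\<close> f card_mono by blast
    finally show "j \<in> {..card (fst G)}" by simp
  qed
  then have "finite ?A" using finite_subset by blast
  moreover have "j \<in> ?A" using S r by blast
  ultimately show ?thesis unfolding reg_def by (rule Max_ge)
qed

lemma reg_le:
  fixes K :: "'k::field itself" and G :: "'a::linorder graph"
  assumes f: "finite (fst G)" and ne: "\<forall>e\<in>snd G. e \<noteq> {}"
    and b: "\<And>S j. S \<subseteq> fst G \<Longrightarrow> red_hom_nonzero K (ind_complex G S) j \<Longrightarrow> j \<le> m"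
  shows "reg K G \<le> m"
proof -
  let ?A = "{j. \<exists>S\<subseteq>fst G. red_hom_nonzero K (ind_complex G S) j}"
  have "?A \<subseteq> {..card (fst G)}"
  proof
    fix j assume "j \<in> ?A"
    then obtain S where "S \<subseteq> fst G" "red_hom_nonzero K (ind_complex G S) j" by blast
    then have "j \<le> card S" using red_bound[OF _ ind_sub] f finite_subset by blast
    also have "card S \<le> card (fst G)" using \<open>S \<subseteq> fst G\<close> f card_mono by blast
    finally show "j \<in> {..card (fst G)}" by simp
  qed
  then have fin: "finite ?A" using finite_subset by blast
  have i0: "ind_complex G {} = {{}}" using ne by (auto simp: ind_complex_def)
  define c :: "'a set \<Rightarrow> 'k" where "c \<sigma> = (if \<sigma> = {} then 1 else 0)" for \<sigma>
  have "red_hom_nonzero K (ind_complex G {}) 0"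
    unfolding red_hom_nonzero_def i0
  proof (intro exI[of _ c] conjI)
    show "is_chain {{}} 0 c" by (simp add: is_chain_def c_def)
    show "bd {{}} c = (\<lambda>_. 0)" by (simp add: bd_def fun_eq_iff)
    show "\<not> (\<exists>b :: 'a set \<Rightarrow> 'k. is_chain {{}} (Suc 0) b \<and> bd {{}} b = c)"
      by (auto simp: bd_def c_def fun_eq_iff)
  qed
  then have "0 \<in> ?A" by blast
  then have "?A \<noteq> {}" by blast
  then show ?thesis unfolding reg_def using fin b by (auto simp: Max_le_iff)
qed




lemma edge2:
  assumes "simple_graph G" "e \<in> snd G"
  obtains a b where "a \<noteq> b" "e = {a, b}" "a \<in> fst G" "b \<in> fst G"
proof -
  have "card e = 2" "e \<subseteq> fst G" using assms by (auto simp: simple_graph_def)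
  then obtain a b where "e = {a, b}" "a \<noteq> b" by (auto simp: card_2_iff)
  then show ?thesis using that \<open>e \<subseteq> fst G\<close> by auto
qed

lemma link_v:
  assumes sg: "simple_graph G" and S: "S \<subseteq> fst G" and v: "v \<in> S"
  shows "{\<sigma>. v \<notin> \<sigma> \<and> insert v \<sigma> \<in> ind_complex G S} = ind_complex G (S - insert v (nbhd G v))"
proof (intro set_eqI iffI)
  fix \<sigma> assume "\<sigma> \<in> {\<sigma>. v \<notin> \<sigma> \<and> insert v \<sigma> \<in> ind_complex G S}"
  then have a: "v \<notin> \<sigma>" "insert v \<sigma> \<subseteq> S" "\<And>e. e \<in> snd G \<Longrightarrow> \<not> e \<subseteq> insert v \<sigma>"
    by (auto simp: ind_complex_def)
  have "z \<notin> nbhd G v" if "z \<in> \<sigma>" for z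
  proof
    assume "z \<in> nbhd G v"
    then have "{v, z} \<in> snd G" by (simp add: nbhd_def)
    moreover have "{v, z} \<subseteq> insert v \<sigma>" using that by blast
    ultimately show False using a(3) by blast
  qed
  moreover have "\<And>e. e \<in> snd G \<Longrightarrow> \<not> e \<subseteq> \<sigma>" using a(3) by blast
  ultimately show "\<sigma> \<in> ind_complex G (S - insert v (nbhd G v))"
    using a(1,2) by (auto simp: ind_complex_def)
next
  fix \<sigma> assume "\<sigma> \<in> ind_complex G (S - insert v (nbhd G v))"
  then have a: "\<sigma> \<subseteq> S" "v \<notin> \<sigma>" "\<And>z. z \<in> \<sigma> \<Longrightarrow> z \<notin> nbhd G v" "\<And>e. e \<in> snd G \<Longrightarrow> \<not> e \<subseteq> \<sigma>"
    by (auto simp: ind_complex_def)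
  have "\<not> e \<subseteq> insert v \<sigma>" if e: "e \<in> snd G" for e
  proof
    assume sub: "e \<subseteq> insert v \<sigma>"
    obtain a b where ab: "a \<noteq> b" "e = {a, b}" "a \<in> fst G" "b \<in> fst G" using edge2[OF sg e] .
    show False
    proof (cases "v \<in> e")
      case False
      then have "e \<subseteq> \<sigma>" using sub by blast
      then show False using a(4) e by blast
    next
      case True
      then obtain z where z: "e = {v, z}" "z \<in> fst G" "z \<noteq> v" using ab by auto
      then have "z \<in> \<sigma>" using sub by blast
      moreover have "z \<in> nbhd G v" using z e by (simp add: nbhd_def)
      ultimately show False using a(3) by blast
    qed
  qed
  then show "\<sigma> \<in> {\<sigma>. v \<notin> \<sigma> \<and> insert v \<sigma> \<in> ind_complex G S}"
    using a(1,2) v by (auto simp: ind_complex_def)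
qed

lemma susp_sets:
  assumes sg: "simple_graph G" and e: "{x, y} \<in> snd G" and xy: "x \<noteq> y"
    and W: "W \<subseteq> fst G" "x \<notin> W" "y \<notin> W" "W \<inter> nbhd G x = {}" "W \<inter> nbhd G y = {}"
  shows "{\<sigma>. x \<notin> \<sigma> \<and> insert x \<sigma> \<in> ind_complex G (insert x (insert y W))} = ind_complex G W"
    and "\<And>\<rho>. x \<notin> \<rho> \<Longrightarrow> insert x \<rho> \<in> ind_complex G (insert x (insert y W)) \<Longrightarrow>
           y \<notin> \<rho> \<and> insert y \<rho> \<in> ind_complex G (insert x (insert y W))"
proof -
  have xyV: "x \<in> fst G" "y \<in> fst G" using sg e by (auto simp: simple_graph_def)
  have yN: "y \<in> nbhd G x" using xyV e by (simp add: nbhd_def)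
  have xN: "x \<in> nbhd G y" using xyV e by (simp add: nbhd_def insert_commute)
  let ?U = "insert x (insert y W)"
  have U: "?U \<subseteq> fst G" using xyV W by blast
  have u1: "?U - insert x (nbhd G x) = W" using yN W xy by blast
  have u2: "?U - insert y (nbhd G y) = W" using xN W xy by blast
  show A: "{\<sigma>. x \<notin> \<sigma> \<and> insert x \<sigma> \<in> ind_complex G ?U} = ind_complex G W"
    using link_v[OF sg U, of x] u1 by simp
  have B: "{\<sigma>. y \<notin> \<sigma> \<and> insert y \<sigma> \<in> ind_complex G ?U} = ind_complex G W"
    using link_v[OF sg U, of y] u2 by simp
  fix \<rho> assume "x \<notin> \<rho>" "insert x \<rho> \<in> ind_complex G ?U"
  then have r: "\<rho> \<in> ind_complex G W" using A by blast
  then have "y \<notin> \<rho>" using W by (auto simp: ind_complex_def)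
  moreover have "insert y \<rho> \<in> ind_complex G ?U" using r B by blast
  ultimately show "y \<notin> \<rho> \<and> insert y \<rho> \<in> ind_complex G ?U" by blast
qed

locale ctr =
  fixes G :: "'a::linorder graph" and x y w :: 'a
  assumes sg: "simple_graph G" and vc: "valid_contraction G x y w"
begin

abbreviation "Gc \<equiv> contract G x y w"

lemma basics: "{x, y} \<in> snd G" "x \<noteq> y" "w \<notin> fst G - {x, y}" "x \<in> fst G" "y \<in> fst G" "finite (fst G)"
  using vc sg by (auto simp: valid_contraction_def simple_graph_def)

lemma fstc: "fst Gc = insert w (fst G - {x, y})" by (simp add: contract_def)
lemma sndc: "snd Gc = {e \<in> snd G. x \<notin> e \<and> y \<notin> e} \<union> {{w, z} | z. z \<in> (nbhd G x \<union> nbhd G y) - {x, y}}"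
  by (simp add: contract_def)

lemma nbhd_sub: "nbhd G v \<subseteq> fst G" by (auto simp: nbhd_def)

lemma simple_c: "simple_graph Gc"
  unfolding simple_graph_def
proof (rule conjI)
  show "finite (fst Gc)" using basics by (simp add: fstc)
  show "\<forall>e\<in>snd Gc. card e = 2 \<and> e \<subseteq> fst Gc"
  proof
  fix e assume "e \<in> snd Gc"
  then consider (a) "e \<in> snd G" "x \<notin> e" "y \<notin> e" | (b) z where "e = {w, z}" "z \<in> (nbhd G x \<union> nbhd G y) - {x, y}"
    unfolding sndc by blast
  then show "card e = 2 \<and> e \<subseteq> fst Gc"
  proof cases
    case a
    then have "card e = 2" "e \<subseteq> fst G" using sg by (auto simp: simple_graph_def)
    then show ?thesis using a by (auto simp: fstc)
  next
    case b
    then have "z \<in> fst G - {x, y}" using nbhd_sub by blast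
    then have "z \<noteq> w" using basics(3) by blast
    then show ?thesis using b \<open>z \<in> fst G - {x, y}\<close> by (auto simp: fstc)
  qed
  qed
qed

lemma ind_same:
  assumes T: "T \<subseteq> fst G - {x, y}"
  shows "ind_complex Gc T = ind_complex G T"
proof -
  have wT: "w \<notin> T" using T basics(3) by blast
  have "(\<forall>e\<in>snd Gc. \<not> e \<subseteq> \<sigma>) \<longleftrightarrow> (\<forall>e\<in>snd G. \<not> e \<subseteq> \<sigma>)" if "\<sigma> \<subseteq> T" for \<sigma>
  proof
    assume h: "\<forall>e\<in>snd Gc. \<not> e \<subseteq> \<sigma>"
    show "\<forall>e\<in>snd G. \<not> e \<subseteq> \<sigma>"
    proof (intro ballI notI)
      fix e assume "e \<in> snd G" "e \<subseteq> \<sigma>"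
      then have "x \<notin> e" "y \<notin> e" using that T by blast+
      then have "e \<in> snd Gc" using \<open>e \<in> snd G\<close> by (simp add: sndc)
      then show False using h \<open>e \<subseteq> \<sigma>\<close> by blast
    qed
  next
    assume h: "\<forall>e\<in>snd G. \<not> e \<subseteq> \<sigma>"
    show "\<forall>e\<in>snd Gc. \<not> e \<subseteq> \<sigma>"
    proof (intro ballI notI)
      fix e assume "e \<in> snd Gc" "e \<subseteq> \<sigma>"
      then consider "e \<in> snd G" | z where "e = {w, z}" unfolding sndc by blast
      then show False
      proof cases
        case 1 then show False using h \<open>e \<subseteq> \<sigma>\<close> by blast
      next
        case 2 then show False using \<open>e \<subseteq> \<sigma>\<close> that wT by blast
      qed
    qed
  qed
  then show ?thesis unfolding ind_complex_def by blast
qed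

lemma link_w:
  assumes wS: "w \<in> S" and S: "S \<subseteq> fst Gc"
  shows "{\<sigma>. w \<notin> \<sigma> \<and> insert w \<sigma> \<in> ind_complex Gc S} = ind_complex G (S - {w} - nbhd G x - nbhd G y)"
proof (intro set_eqI iffI)
  have T: "S - {w} \<subseteq> fst G - {x, y}" using S by (auto simp: fstc)
  fix \<sigma>
  {
    assume "\<sigma> \<in> {\<sigma>. w \<notin> \<sigma> \<and> insert w \<sigma> \<in> ind_complex Gc S}"
    then have a: "w \<notin> \<sigma>" "insert w \<sigma> \<subseteq> S" "\<And>e. e \<in> snd Gc \<Longrightarrow> \<not> e \<subseteq> insert w \<sigma>"
      by (auto simp: ind_complex_def)
    have sT: "\<sigma> \<subseteq> S - {w}" using a by blast
    have "z \<notin> nbhd G x \<and> z \<notin> nbhd G y" if "z \<in> \<sigma>" for z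
    proof -
      have zz: "z \<in> fst G - {x, y}" using that sT T by blast
      {
        assume "z \<in> nbhd G x \<or> z \<in> nbhd G y"
        then have "{w, z} \<in> snd Gc" using zz by (auto simp: sndc)
        moreover have "{w, z} \<subseteq> insert w \<sigma>" using that by blast
        ultimately have False using a(3) by blast
      }
      then show ?thesis by blast
    qed
    moreover have "\<not> e \<subseteq> \<sigma>" if "e \<in> snd G" for e
    proof
      assume "e \<subseteq> \<sigma>"
      then have "x \<notin> e" "y \<notin> e" using sT T by blast+
      then have "e \<in> snd Gc" using that by (simp add: sndc)
      then show False using a(3) \<open>e \<subseteq> \<sigma>\<close> by blast
    qed
    ultimately show "\<sigma> \<in> ind_complex G (S - {w} - nbhd G x - nbhd G y)"
      using sT by (auto simp: ind_complex_def)
  }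
  {
    assume "\<sigma> \<in> ind_complex G (S - {w} - nbhd G x - nbhd G y)"
    then have a: "\<sigma> \<subseteq> S - {w}" "\<And>z. z \<in> \<sigma> \<Longrightarrow> z \<notin> nbhd G x \<and> z \<notin> nbhd G y"
      "\<And>e. e \<in> snd G \<Longrightarrow> \<not> e \<subseteq> \<sigma>"
      by (auto simp: ind_complex_def)
    have "\<not> e \<subseteq> insert w \<sigma>" if e: "e \<in> snd Gc" for e
    proof
      assume sub: "e \<subseteq> insert w \<sigma>"
      from e consider (a) "e \<in> snd G" "x \<notin> e" "y \<notin> e" | (b) z where "e = {w, z}" "z \<in> (nbhd G x \<union> nbhd G y) - {x, y}"
        unfolding sndc by blast
      then show False
      proof cases
        case a
        have "e \<subseteq> fst G" using a(1) sg by (auto simp: simple_graph_def)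
        then have "w \<notin> e" using a basics(3) by blast
        then have "e \<subseteq> \<sigma>" using sub by blast
        then show False using a(1) \<open>\<And>e. e \<in> snd G \<Longrightarrow> \<not> e \<subseteq> \<sigma>\<close> by blast
      next
        case b
        then have "z \<in> fst G - {x, y}" using nbhd_sub by blast
        then have "z \<noteq> w" using basics(3) by blast
        then have "z \<in> \<sigma>" using b sub by blast
        then show False using a(2) b by blast
      qed
    qed
    then show "\<sigma> \<in> {\<sigma>. w \<notin> \<sigma> \<and> insert w \<sigma> \<in> ind_complex Gc S}"
      using a(1) wS by (auto simp: ind_complex_def)
  }
qed

end




lemma ORv:
  fixes K :: "'k::field itself" and G :: "'a::linorder graph"
  assumes sg: "simple_graph G" and S: "S \<subseteq> fst G" and v: "v \<in> S"
    and r: "red_hom_nonzero K (ind_complex G S) (Suc p)"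
  shows "red_hom_nonzero K (ind_complex G (S - {v})) (Suc p) \<or>
         red_hom_nonzero K (ind_complex G (S - insert v (nbhd G v))) p"
proof -
  have fV: "finite (fst G)" using sg by (simp add: simple_graph_def)
  have U: "\<Union>(ind_complex G T) \<subseteq> fst G" if "T \<subseteq> fst G" for T
    using ind_Union[of G T] that by blast
  have sub: "ind_complex G S \<subseteq> Pow (fst G)" using ind_sub[of G S] S by blast
  have vV: "v \<in> fst G" using v S by blast
  have H: "Hn K (fst G) (ind_complex G S) (Suc p)" using r red_Hn[where K=K, OF fV U[OF S]] by simp
  have "Hn K (fst G) {\<sigma> \<in> ind_complex G S. v \<notin> \<sigma>} (Suc p) \<or>
        Hn K (fst G) {\<sigma>. v \<notin> \<sigma> \<and> insert v \<sigma> \<in> ind_complex G S} p"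
    by (rule OR[OF fV sub ind_dc vV H])
  then have h: "Hn K (fst G) (ind_complex G (S - {v})) (Suc p) \<or>
        Hn K (fst G) (ind_complex G (S - insert v (nbhd G v))) p"
    unfolding ind_del link_v[OF sg S v] .
  have s1: "S - {v} \<subseteq> fst G" and s2: "S - insert v (nbhd G v) \<subseteq> fst G" using S by auto
  show ?thesis using h unfolding red_Hn[where K=K, OF fV U[OF s1]] red_Hn[where K=K, OF fV U[OF s2]] .
qed

context ctr
begin

lemma finc: "finite (fst Gc)" using simple_c by (simp add: simple_graph_def)

lemma nonempty_edges: "simple_graph H \<Longrightarrow> \<forall>e\<in>snd H. e \<noteq> {}"
  by (auto simp: simple_graph_def)

lemma partA:
  fixes K :: "'k::field itself"
  shows "reg K Gc \<le> reg K G"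
proof (rule reg_le[OF finc nonempty_edges[OF simple_c]])
  fix S j assume S: "S \<subseteq> fst Gc" and r: "red_hom_nonzero K (ind_complex Gc S) j"
  show "j \<le> reg K G"
  proof (cases "w \<in> S")
    case False
    then have T: "S \<subseteq> fst G - {x, y}" using S by (auto simp: fstc)
    have "S \<subseteq> fst G" using T by blast
    moreover have "red_hom_nonzero K (ind_complex G S) j" using r ind_same[OF T] by simp
    ultimately show ?thesis using reg_ge[OF basics(6)] by blast
  next
    case wS: True
    show ?thesis
    proof (cases j)
      case 0 then show ?thesis by simp
    next
      case (Suc p)
      define V where "V = insert w (fst G)"
      have fV: "finite V" using basics(6) by (simp add: V_def)
      have SV: "S \<subseteq> V" using S by (auto simp: fstc V_def)
      have GV: "fst G \<subseteq> V" by (auto simp: V_def)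
      have T: "S - {w} \<subseteq> fst G - {x, y}" using S by (auto simp: fstc)
      have UV: "\<Union>(ind_complex Gc S) \<subseteq> V" using ind_Union[of Gc S] SV by blast
      have H: "Hn K V (ind_complex Gc S) (Suc p)"
        using r Suc red_Hn[where K=K, OF fV UV] by simp
      have subS: "ind_complex Gc S \<subseteq> Pow V" using ind_sub[of Gc S] SV by blast
      have wV: "w \<in> V" by (simp add: V_def)
      have "Hn K V {\<sigma> \<in> ind_complex Gc S. w \<notin> \<sigma>} (Suc p) \<or>
            Hn K V {\<sigma>. w \<notin> \<sigma> \<and> insert w \<sigma> \<in> ind_complex Gc S} p"
        by (rule OR[OF fV subS ind_dc wV H])
      then have disj: "Hn K V (ind_complex G (S - {w})) (Suc p) \<or>
            Hn K V (ind_complex G (S - {w} - nbhd G x - nbhd G y)) p"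
        unfolding ind_del ind_same[OF T] link_w[OF wS S] .
      then show ?thesis
      proof
        assume h: "Hn K V (ind_complex G (S - {w})) (Suc p)"
        have "\<Union>(ind_complex G (S - {w})) \<subseteq> V" using ind_Union[of G "S - {w}"] SV by blast
        then have "red_hom_nonzero K (ind_complex G (S - {w})) (Suc p)" using h red_Hn[where K=K, OF fV] by simp
        then show ?thesis using Suc reg_ge[OF basics(6)] T by blast
      next
        define W where "W = S - {w} - nbhd G x - nbhd G y"
        assume h: "Hn K V (ind_complex G (S - {w} - nbhd G x - nbhd G y)) p"
        have W: "W \<subseteq> fst G" "x \<notin> W" "y \<notin> W" "W \<inter> nbhd G x = {}" "W \<inter> nbhd G y = {}"
          using T by (auto simp: W_def)
        note ss = susp_sets[OF sg basics(1) basics(2) W]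
        define U where "U = insert x (insert y W)"
        have UG: "U \<subseteq> fst G" using W basics by (auto simp: U_def)
        have subU: "ind_complex G U \<subseteq> Pow V" using ind_sub[of G U] UG GV by blast
        have h': "Hn K V {\<sigma>. x \<notin> \<sigma> \<and> insert x \<sigma> \<in> ind_complex G U} p"
          using h ss(1) by (simp add: U_def W_def)
        have "Hn K V (ind_complex G U) (Suc p)"
        proof (rule SUSP[OF fV subU _ _ basics(2) _ h'])
          show "x \<in> V" "y \<in> V" using GV basics by blast+
          show "\<And>\<rho>. x \<notin> \<rho> \<Longrightarrow> insert x \<rho> \<in> ind_complex G U \<Longrightarrow> y \<notin> \<rho> \<and> insert y \<rho> \<in> ind_complex G U"
            using ss(2) unfolding U_def .
        qed
        moreover have "\<Union>(ind_complex G U) \<subseteq> V" using ind_Union[of G U] subU UG GV by blast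
        ultimately have "red_hom_nonzero K (ind_complex G U) (Suc p)" using red_Hn[where K=K, OF fV] by simp
        then show ?thesis using Suc reg_ge[OF basics(6) UG] by blast
      qed
    qed
  qed
qed

lemma direct:
  fixes K :: "'k::field itself"
  assumes T: "S \<subseteq> fst G - {x, y}" and r: "red_hom_nonzero K (ind_complex G S) j"
  shows "j \<le> reg K Gc"
proof -
  have "S \<subseteq> fst Gc" using T by (auto simp: fstc)
  moreover have "red_hom_nonzero K (ind_complex Gc S) j" using r ind_same[OF T] by simp
  ultimately show ?thesis using reg_ge[OF finc] by blast
qed

lemma partQ:
  fixes K :: "'k::field itself"
  assumes S: "S \<subseteq> fst G" and xS: "x \<notin> S" and r: "red_hom_nonzero K (ind_complex G S) j"
  shows "j \<le> reg K Gc + 1"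
proof (cases "y \<in> S")
  case False
  then have "S \<subseteq> fst G - {x, y}" using S xS by blast
  from direct[OF this r] show ?thesis by simp
next
  case yS: True
  show ?thesis
  proof (cases j)
    case 0 then show ?thesis by simp
  next
    case (Suc p)
    have xN: "x \<in> nbhd G y" using basics by (simp add: nbhd_def insert_commute)
    from ORv[OF sg S yS, of K p] r Suc
    have "red_hom_nonzero K (ind_complex G (S - {y})) (Suc p) \<or>
          red_hom_nonzero K (ind_complex G (S - insert y (nbhd G y))) p" by blast
    then show ?thesis
    proof
      assume a: "red_hom_nonzero K (ind_complex G (S - {y})) (Suc p)"
      have "S - {y} \<subseteq> fst G - {x, y}" using S xS by blast
      from direct[OF this a] show ?thesis using Suc by simp
    next
      assume a: "red_hom_nonzero K (ind_complex G (S - insert y (nbhd G y))) p"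
      have "S - insert y (nbhd G y) \<subseteq> fst G - {x, y}" using S xS by blast
      from direct[OF this a] show ?thesis using Suc by simp
    qed
  qed
qed

lemma partB:
  fixes K :: "'k::field itself"
  shows "reg K G \<le> reg K Gc + 1"
proof (rule reg_le[OF basics(6) nonempty_edges[OF sg]])
  fix S j assume S: "S \<subseteq> fst G" and r: "red_hom_nonzero K (ind_complex G S) j"
  show "j \<le> reg K Gc + 1"
  proof (cases "x \<in> S")
    case False from partQ[OF S False r] show ?thesis .
  next
    case xS: True
    show ?thesis
    proof (cases j)
      case 0 then show ?thesis by simp
    next
      case (Suc p)
      have yN: "y \<in> nbhd G x" using basics by (simp add: nbhd_def)
      from ORv[OF sg S xS, of K p] r Suc
      have "red_hom_nonzero K (ind_complex G (S - {x})) (Suc p) \<or>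
            red_hom_nonzero K (ind_complex G (S - insert x (nbhd G x))) p" by blast
      then show ?thesis
      proof
        assume a: "red_hom_nonzero K (ind_complex G (S - {x})) (Suc p)"
        have "S - {x} \<subseteq> fst G" "x \<notin> S - {x}" using S by auto
        from partQ[OF this a] show ?thesis using Suc by simp
      next
        assume a: "red_hom_nonzero K (ind_complex G (S - insert x (nbhd G x))) p"
        have "S - insert x (nbhd G x) \<subseteq> fst G - {x, y}" using S yN by blast
        from direct[OF this a] show ?thesis using Suc by simp
      qed
    qed
  qed
qed

end

lemma seq:
  fixes K :: "'k::field itself" and G :: "'a::linorder graph"
  assumes "contr_seq G H" "simple_graph G"
  shows "simple_graph H \<and> reg K H \<le> reg K G"
  using assms
proof (induction rule: contr_seq.induct)
  case (refl G) then show ?case by simp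
next
  case (step G H x y w)
  then have sH: "simple_graph H" "reg K H \<le> reg K G" by blast+
  interpret c: ctr H x y w using sH(1) step.hyps(2) by unfold_locales
  show ?case using c.simple_c c.partA[of K] sH(2) by simp
qed

theorem mainTheorem17:
  fixes G :: "'a::linorder graph" and K :: "'k::field itself"
  assumes "simple_graph G"
  shows "(\<forall>x y w. valid_contraction G x y w \<longrightarrow>
            reg K (contract G x y w) \<le> reg K G \<and> reg K G \<le> reg K (contract G x y w) + 1)
       \<and> (\<forall>H. contr_seq G H \<longrightarrow> reg K H \<le> reg K G)"
proof (intro conjI allI impI)
  fix x y w assume v: "valid_contraction G x y w"
  interpret c: ctr G x y w using assms v by unfold_locales
  show "reg K (contract G x y w) \<le> reg K G" by (rule c.partA)
  show "reg K G \<le> reg K (contract G x y w) + 1" by (rule c.partB)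
next
  fix H assume "contr_seq G H"
  from seq[OF this assms] show "reg K H \<le> reg K G" by blast
qed


end
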